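(* Let $L\subset\mathbb{N}^2$ be a simple planar distributive lattice of rank $d+1$, and let $\lambda$ be the edge-labeling described in the context. Then $\lambda$ is an EL-labeling of $L$.
   Context: $\mathbb{N}^2$ is ordered componentwise. A planar distributive lattice is a finite sublattice $L$ of $\mathbb{N}^2$ with $(0,0)\in L$ such that for any $(i,j)\le(k,\ell)$ in $L$ there is a chain in $L$ from $(i,j)$ to $(k,\ell)$ in which the coordinate sum increases by exactly $1$ at each step; so every covering in $L$ is a horizontal or vertical unit step. $L$ is simple if it has no cut edge (a pair $(a,b)$, $\operatorname{rank} b=\operatorname{rank} a+1$, with $a$ the unique element of its rank and $b$ the unique element of its rank). Let $\mathfrak{c}_0: x_0<\dots<x_{d+1}$, $x_t=(i_t,j_t)$, be the maximal chain with $x_0=(0,0)$, $x_{d+1}=\max L$, such that for every $(k,\ell)\in L$ with $k=i_t$ for some $t$, $\ell\le j_t$. Labeling $\lambda$: the edge $x_t\to x_{t+1}$ gets label $t+1$; if $i_{t+1}=i_t+1$ then all edges $(i_t,j)\to(i_{t+1},j)$ of $L$ get label $t+1$; if $j_{t+1}=j_t+1$ then all edges $(i,j_t)\to(i,j_{t+1})$ of $L$ get label $t+1$. A chain $z_0\to\dots\to z_k$ (each $z_{s+1}$ covering $z_s$) is labeled by $(\lambda(z_0\to z_1),\dots,\lambda(z_{k-1}\to z_k))$, compared lexicographically. An edge-labeling is an EL-labeling if for every interval $[x,y]$ of $L$: (i) there is a unique maximal chain $x=z_0\to\dots\to z_k=y$ of $[x,y]$ with weakly increasing labels, and (ii) every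 other maximal chain of $[x,y]$ has label tuple lexicographically strictly larger than that chain's. *)

theory Defs
  imports Main
begin

type_synonym pt = "nat \<times> nat"

definition le2 :: "pt \<Rightarrow> pt \<Rightarrow> bool" where
  "le2 a b \<longleftrightarrow> fst a \<le> fst b \<and> snd a \<le> snd b"

definition lt2 :: "pt \<Rightarrow> pt \<Rightarrow> bool" where
  "lt2 a b \<longleftrightarrow> le2 a b \<and> a \<noteq> b"

definition rk :: "pt \<Rightarrow> nat" where
  "rk a = fst a + snd a"

definition planar_distributive_lattice :: "pt set \<Rightarrow> bool" where
  "planar_distributive_lattice L \<longleftrightarrow>
     finite L \<and> (0,0) \<in> L \<and>
     (\<forall>a\<in>L. \<forall>b\<in>L. (min (fst a) (fst b), min (snd a) (snd b)) \<in> L) \<and>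
     (\<forall>a\<in>L. \<forall>b\<in>L. (max (fst a) (fst b), max (snd a) (snd b)) \<in> L) \<and>
     (\<forall>a\<in>L. \<forall>b\<in>L. le2 a b \<longrightarrow>
        (\<exists>zs. zs \<noteq> [] \<and> hd zs = a \<and> last zs = b \<and> set zs \<subseteq> L \<and>
              (\<forall>s. Suc s < length zs \<longrightarrow>
                   le2 (zs ! s) (zs ! Suc s) \<and> rk (zs ! Suc s) = rk (zs ! s) + 1)))"

text \<open>Maximum of L (exists since L is finite and closed under joins).\<close>
definition topL :: "pt set \<Rightarrow> pt" where
  "topL L = (Max (fst ` L), Max (snd ` L))"

text \<open>Simple: no cut edge.\<close>
definition simple_pdl :: "pt set \<Rightarrow> bool" where
  "simple_pdl L \<longleftrightarrow>
     \<not> (\<exists>a\<in>L. \<exists>b\<in>L. rk b = rk a + 1 \<and>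
            (\<forall>c\<in>L. rk c = rk a \<longrightarrow> c = a) \<and>
            (\<forall>c\<in>L. rk c = rk b \<longrightarrow> c = b))"

definition covers :: "pt set \<Rightarrow> pt \<Rightarrow> pt \<Rightarrow> bool" where
  "covers L a b \<longleftrightarrow> a \<in> L \<and> b \<in> L \<and> lt2 a b \<and> \<not> (\<exists>c\<in>L. lt2 a c \<and> lt2 c b)"

definition max_chain :: "pt set \<Rightarrow> pt \<Rightarrow> pt \<Rightarrow> pt list \<Rightarrow> bool" where
  "max_chain L u v zs \<longleftrightarrow> zs \<noteq> [] \<and> hd zs = u \<and> last zs = v \<and>
     (\<forall>s. Suc s < length zs \<longrightarrow> covers L (zs ! s) (zs ! Suc s))"

definition chain_labels :: "(pt \<Rightarrow> pt \<Rightarrow> nat) \<Rightarrow> pt list \<Rightarrow> nat list" where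
  "chain_labels lab zs = map (\<lambda>(a, b). lab a b) (zip zs (tl zs))"

definition lex_less :: "nat list \<Rightarrow> nat list \<Rightarrow> bool" where
  "lex_less l1 l2 \<longleftrightarrow> (l1, l2) \<in> lexord {(a, b). a < b}"

definition EL_labeling :: "pt set \<Rightarrow> (pt \<Rightarrow> pt \<Rightarrow> nat) \<Rightarrow> bool" where
  "EL_labeling L lab \<longleftrightarrow>
     (\<forall>u\<in>L. \<forall>v\<in>L. le2 u v \<longrightarrow>
        (\<exists>!zs. max_chain L u v zs \<and> sorted (chain_labels lab zs)) \<and>
        (\<forall>zs zs'. max_chain L u v zs \<and> sorted (chain_labels lab zs) \<and>
                  max_chain L u v zs' \<and> zs' \<noteq> zs \<longrightarrow>
                  lex_less (chain_labels lab zs) (chain_labels lab zs')))"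

definition is_c0 :: "pt set \<Rightarrow> nat \<Rightarrow> (nat \<Rightarrow> pt) \<Rightarrow> bool" where
  "is_c0 L d x \<longleftrightarrow>
     x 0 = (0, 0) \<and> x (d + 1) = topL L \<and>
     (\<forall>t\<le>d. covers L (x t) (x (Suc t))) \<and>
     (\<forall>k l. (k, l) \<in> L \<longrightarrow> (\<exists>t\<le>d+1. fst (x t) = k) \<longrightarrow>
            (\<exists>t\<le>d+1. fst (x t) = k \<and> l \<le> snd (x t)))"

text \<open>The labeling lambda induced by c_0: a horizontal edge (i,j)->(i+1,j) gets label t+1
  where x_t -> x_{t+1} is the horizontal step of c_0 from column i; a vertical edge
  (i,j)->(i,j+1) gets label t+1 where x_t -> x_{t+1} is the vertical step of c_0 from row j.\<close>
definition c0_label :: "nat \<Rightarrow> (nat \<Rightarrow> pt) \<Rightarrow> pt \<Rightarrow> pt \<Rightarrow> nat" where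
  "c0_label d x a b =
     (if fst b = Suc (fst a) then
        Suc (LEAST t. t \<le> d \<and> fst (x t) = fst a \<and> fst (x (Suc t)) = Suc (fst (x t)))
      else
        Suc (LEAST t. t \<le> d \<and> snd (x t) = snd a \<and> snd (x (Suc t)) = Suc (snd (x t))))"

end

theory Submission
  imports Defs
begin

lemma le2_trans: "le2 a b \<Longrightarrow> le2 b c \<Longrightarrow> le2 a c"
  unfolding le2_def by auto

lemma chain_mono:
  assumes "\<forall>s. Suc s < length zs \<longrightarrow> le2 (zs!s) (zs!Suc s)"
  shows "i \<le> k \<Longrightarrow> k < length zs \<Longrightarrow> le2 (zs!i) (zs!k)"
proof (induction k)
  case 0 then show ?case by (simp add: le2_def)
next
  case (Suc k)
  show ?case
  proof (cases "i = Suc k")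
    case True then show ?thesis by (simp add: le2_def)
  next
    case False
    then have "le2 (zs!i) (zs!k)" using Suc by simp
    moreover have "le2 (zs!k) (zs!Suc k)" using assms Suc.prems by simp
    ultimately show ?thesis by (rule le2_trans)
  qed
qed

lemma nat_ivt:
  fixes g :: "nat \<Rightarrow> nat"
  shows "g 0 \<le> i \<Longrightarrow> i < g (Suc d) \<Longrightarrow> (\<forall>t\<le>d. g (Suc t) \<le> Suc (g t)) \<Longrightarrow>
    \<exists>t\<le>d. g t = i \<and> g (Suc t) = Suc i"
proof (induction d)
  case 0 then show ?case by force
next
  case (Suc d)
  show ?case
  proof (cases "i < g (Suc d)")
    case True
    with Suc obtain t where "t \<le> d" "g t = i \<and> g (Suc t) = Suc i" by auto
    then show ?thesis by (intro exI[of _ t]) auto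
  next
    case False
    have "g (Suc (Suc d)) \<le> Suc (g (Suc d))" using Suc.prems(3) by auto
    with False Suc.prems(2) have "g (Suc d) = i" "g (Suc (Suc d)) = Suc i"
      by linarith+
    then show ?thesis by (intro exI[of _ "Suc d"]) auto
  qed
qed

lemma all_suc_less_cons2:
  "(\<forall>s. Suc s < length (a # b # r) \<longrightarrow> P ((a#b#r)!s) ((a#b#r)!Suc s)) \<longleftrightarrow>
   P a b \<and> (\<forall>s. Suc s < length (b # r) \<longrightarrow> P ((b#r)!s) ((b#r)!Suc s))"
  apply (rule iffI)
   apply (intro conjI)
    apply (erule allE[of _ 0]; simp)
   apply (intro allI impI)
   apply (erule_tac x="Suc s" in allE; simp)
  apply (intro allI impI)
  apply (case_tac s; simp)
  done

lemma mc_single: "max_chain L u v [a] \<longleftrightarrow> a = u \<and> v = u"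
  unfolding max_chain_def by auto

lemma mc_cons: "max_chain L u v (a # b # r) \<longleftrightarrow> a = u \<and> covers L u b \<and> max_chain L b v (b # r)"
  unfolding max_chain_def using all_suc_less_cons2[of a b r "covers L"] by auto

lemma cl_single: "chain_labels f [a] = []"
  unfolding chain_labels_def by simp

lemma cl_cons: "chain_labels f (a # b # r) = f a b # chain_labels f (b # r)"
  unfolding chain_labels_def by simp

lemma lex_sorted:
  "sorted l1 \<Longrightarrow> distinct l1 \<Longrightarrow> distinct l2 \<Longrightarrow> set l1 = set l2 \<Longrightarrow> l1 \<noteq> l2 \<Longrightarrow>
   (l1, l2) \<in> lexord {(a::nat, b). a < b}"
proof (induction l1 arbitrary: l2)
  case Nil then show ?case by simp
next
  case (Cons a r)
  then obtain b r2 where l2: "l2 = b # r2" by (cases l2) auto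
  show ?case
  proof (cases "a = b")
    case True
    have "set r = set r2" using Cons.prems l2 True by auto
    then have "(r, r2) \<in> lexord {(a::nat, b). a < b}"
      using Cons l2 True by auto
    then show ?thesis using l2 True by simp
  next
    case False
    then have "b \<in> set r" using Cons.prems l2 by (metis list.set_intros(1) set_ConsD)
    then have "a < b" using Cons.prems False by auto
    then show ?thesis using l2 by simp
  qed
qed


locale pl =
  fixes L :: "pt set" and d :: nat and x :: "nat \<Rightarrow> pt"
  assumes pdl: "planar_distributive_lattice L"
    and c0: "is_c0 L d x"
begin

definition H :: "nat \<Rightarrow> nat" where
  "H i = Suc (LEAST t. t \<le> d \<and> fst (x t) = i \<and> fst (x (Suc t)) = Suc (fst (x t)))"
definition V :: "nat \<Rightarrow> nat" where
  "V j = Suc (LEAST t. t \<le> d \<and> snd (x t) = j \<and> snd (x (Suc t)) = Suc (snd (x t)))"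

lemma lab: "c0_label d x a b = (if fst b = Suc (fst a) then H (fst a) else V (snd a))"
  unfolding c0_label_def H_def V_def by simp

lemma finL: "finite L" using pdl unfolding planar_distributive_lattice_def by auto

lemma join: "a \<in> L \<Longrightarrow> b \<in> L \<Longrightarrow> (max (fst a) (fst b), max (snd a) (snd b)) \<in> L"
  using pdl unfolding planar_distributive_lattice_def by auto

lemma next_step:
  assumes "u \<in> L" "v \<in> L" "le2 u v" "u \<noteq> v"
  shows "\<exists>w\<in>L. (w = (Suc (fst u), snd u) \<or> w = (fst u, Suc (snd u))) \<and> le2 w v"
proof -
  obtain zs where zs: "zs \<noteq> []" "hd zs = u" "last zs = v" "set zs \<subseteq> L"
    "\<forall>s. Suc s < length zs \<longrightarrow> le2 (zs ! s) (zs ! Suc s) \<and> rk (zs ! Suc s) = rk (zs ! s) + 1"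
    using pdl assms unfolding planar_distributive_lattice_def by blast
  have len: "length zs \<ge> 2"
  proof (rule ccontr)
    assume "\<not> ?thesis"
    moreover have "length zs > 0" using zs(1) by simp
    ultimately have "length zs = 1" by linarith
    then have "hd zs = last zs" by (cases zs) auto
    then show False using zs assms by simp
  qed
  define w where "w = zs ! 1"
  have wL: "w \<in> L" using zs(4) len nth_mem[of 1 zs] unfolding w_def by auto
  have h0: "zs ! 0 = u" using zs(1,2) by (simp add: hd_conv_nth)
  have s1: "le2 u w" "rk w = rk u + 1" using zs(5)[rule_format, of 0] len h0 w_def by auto
  have mono: "\<forall>s. Suc s < length zs \<longrightarrow> le2 (zs ! s) (zs ! Suc s)" using zs(5) by blast
  have "le2 w (zs ! (length zs - 1))" unfolding w_def
    by (rule chain_mono[OF mono]) (use len in auto)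
  then have "le2 w v" using zs(1,3) by (simp add: last_conv_nth)
  moreover have "w = (Suc (fst u), snd u) \<or> w = (fst u, Suc (snd u))"
    using s1 unfolding le2_def rk_def by (cases u, cases w) auto
  ultimately show ?thesis using wL by blast
qed

lemma cover_step:
  assumes "covers L a b"
  shows "b = (Suc (fst a), snd a) \<or> b = (fst a, Suc (snd a))"
proof -
  have ab: "a \<in> L" "b \<in> L" "lt2 a b" and nc: "\<not> (\<exists>c\<in>L. lt2 a c \<and> lt2 c b)"
    using assms unfolding covers_def by auto
  obtain w where w: "w \<in> L" "w = (Suc (fst a), snd a) \<or> w = (fst a, Suc (snd a))" "le2 w b"
    using next_step[of a b] ab unfolding lt2_def by blast
  have "lt2 a w" using w(2) unfolding lt2_def le2_def by (cases a) auto
  then have "w = b" using nc w ab(2) unfolding lt2_def by blast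
  then show ?thesis using w by simp
qed

lemma step_cover:
  assumes "a \<in> L" "b \<in> L" "b = (Suc (fst a), snd a) \<or> b = (fst a, Suc (snd a))"
  shows "covers L a b"
proof -
  have "\<not> (\<exists>c\<in>L. lt2 a c \<and> lt2 c b)"
  proof
    assume "\<exists>c\<in>L. lt2 a c \<and> lt2 c b"
    then obtain c where c: "lt2 a c" "lt2 c b" by blast
    obtain a1 a2 where a: "a = (a1, a2)" by (cases a)
    obtain c1 c2 where cc: "c = (c1, c2)" by (cases c)
    from assms(3) show False
    proof
      assume b: "b = (Suc (fst a), snd a)"
      from c have "a1 \<le> c1" "c1 \<le> Suc a1" "c2 = a2" "(a1,a2) \<noteq> (c1,c2)" "(c1,c2) \<noteq> (Suc a1, a2)"
        unfolding lt2_def le2_def a cc b by auto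
      then show False by (cases "c1 = a1") auto
    next
      assume b: "b = (fst a, Suc (snd a))"
      from c have "a2 \<le> c2" "c2 \<le> Suc a2" "c1 = a1" "(a1,a2) \<noteq> (c1,c2)" "(c1,c2) \<noteq> (a1, Suc a2)"
        unfolding lt2_def le2_def a cc b by auto
      then show False by (cases "c2 = a2") auto
    qed
  qed
  moreover have "lt2 a b" using assms(3) unfolding lt2_def le2_def by (cases a) auto
  ultimately show ?thesis using assms(1,2) unfolding covers_def by blast
qed

lemma x_cov: "t \<le> d \<Longrightarrow> covers L (x t) (x (Suc t))"
  using c0 unfolding is_c0_def by auto

lemma x_L: "t \<le> Suc d \<Longrightarrow> x t \<in> L"
  using x_cov[of t] x_cov[of "t - 1"] unfolding covers_def
  by (cases t) (auto simp: le_Suc_eq)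

lemma x_step: "t \<le> d \<Longrightarrow> x (Suc t) = (Suc (fst (x t)), snd (x t)) \<or> x (Suc t) = (fst (x t), Suc (snd (x t)))"
  using cover_step[OF x_cov] by blast

lemma x0: "x 0 = (0,0)" using c0 unfolding is_c0_def by auto
lemma xtop: "x (Suc d) = topL L" using c0 unfolding is_c0_def by auto

lemma x_mono: "t \<le> t' \<Longrightarrow> t' \<le> Suc d \<Longrightarrow> le2 (x t) (x t')"
proof (induction t')
  case 0 then show ?case by (simp add: le2_def)
next
  case (Suc t')
  show ?case
  proof (cases "t = Suc t'")
    case True then show ?thesis by (simp add: le2_def)
  next
    case False
    then have "le2 (x t) (x t')" using Suc by simp
    moreover have "le2 (x t') (x (Suc t'))" using x_step[of t'] Suc.prems unfolding le2_def by auto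
    ultimately show ?thesis by (rule le2_trans)
  qed
qed

lemma top_fst: "v \<in> L \<Longrightarrow> fst v \<le> fst (x (Suc d))"
  using xtop finL unfolding topL_def by simp
lemma top_snd: "v \<in> L \<Longrightarrow> snd v \<le> snd (x (Suc d))"
  using xtop finL unfolding topL_def by simp

lemma Hspec:
  assumes "i < fst (x (Suc d))"
  shows "\<exists>t. H i = Suc t \<and> t \<le> d \<and> fst (x t) = i \<and> x (Suc t) = (Suc i, snd (x t))"
proof -
  have "\<exists>t\<le>d. fst (x t) = i \<and> fst (x (Suc t)) = Suc i"
    using nat_ivt[of "\<lambda>t. fst (x t)" i d] assms x0 x_step by fastforce
  then have ex: "\<exists>t. t \<le> d \<and> fst (x t) = i \<and> fst (x (Suc t)) = Suc (fst (x t))" by auto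
  define t where "t = (LEAST t. t \<le> d \<and> fst (x t) = i \<and> fst (x (Suc t)) = Suc (fst (x t)))"
  have P: "t \<le> d \<and> fst (x t) = i \<and> fst (x (Suc t)) = Suc (fst (x t))"
    unfolding t_def by (rule LeastI_ex[OF ex])
  then have "x (Suc t) = (Suc i, snd (x t))" using x_step[of t] by auto
  then show ?thesis using P unfolding H_def t_def by auto
qed

lemma Vspec:
  assumes "j < snd (x (Suc d))"
  shows "\<exists>t. V j = Suc t \<and> t \<le> d \<and> snd (x t) = j \<and> x (Suc t) = (fst (x t), Suc j)"
proof -
  have "\<exists>t\<le>d. snd (x t) = j \<and> snd (x (Suc t)) = Suc j"
    using nat_ivt[of "\<lambda>t. snd (x t)" j d] assms x0 x_step by fastforce
  then have ex: "\<exists>t. t \<le> d \<and> snd (x t) = j \<and> snd (x (Suc t)) = Suc (snd (x t))" by auto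
  define t where "t = (LEAST t. t \<le> d \<and> snd (x t) = j \<and> snd (x (Suc t)) = Suc (snd (x t)))"
  have P: "t \<le> d \<and> snd (x t) = j \<and> snd (x (Suc t)) = Suc (snd (x t))"
    unfolding t_def by (rule LeastI_ex[OF ex])
  then have "x (Suc t) = (fst (x t), Suc j)" using x_step[of t] by auto
  then show ?thesis using P unfolding V_def t_def by auto
qed

lemma H_mono:
  assumes "i < i'" "i' < fst (x (Suc d))"
  shows "H i < H i'"
proof -
  obtain t where t: "H i = Suc t" "t \<le> d" "fst (x t) = i" using Hspec[of i] assms by auto
  obtain t' where t': "H i' = Suc t'" "t' \<le> d" "fst (x t') = i'" using Hspec[of i'] assms by auto
  have "t < t'"
  proof (rule ccontr)
    assume "\<not> t < t'"
    then have "le2 (x t') (x t)" using x_mono[of t' t] t by auto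
    then show False using t t' assms unfolding le2_def by auto
  qed
  then show ?thesis using t t' by simp
qed

lemma V_mono:
  assumes "j < j'" "j' < snd (x (Suc d))"
  shows "V j < V j'"
proof -
  obtain t where t: "V j = Suc t" "t \<le> d" "snd (x t) = j" using Vspec[of j] assms by auto
  obtain t' where t': "V j' = Suc t'" "t' \<le> d" "snd (x t') = j'" using Vspec[of j'] assms by auto
  have "t < t'"
  proof (rule ccontr)
    assume "\<not> t < t'"
    then have "le2 (x t') (x t)" using x_mono[of t' t] t by auto
    then show False using t t' assms unfolding le2_def by auto
  qed
  then show ?thesis using t t' by simp
qed

lemma HV_neq:
  assumes "i < fst (x (Suc d))" "j < snd (x (Suc d))"
  shows "H i \<noteq> V j"
proof
  assume eq: "H i = V j"
  obtain t where t: "H i = Suc t" "fst (x t) = i" "x (Suc t) = (Suc i, snd (x t))" using Hspec[of i] assms by auto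
  obtain s where s: "V j = Suc s" "x (Suc s) = (fst (x s), Suc j)" using Vspec[of j] assms by auto
  have "s = t" using eq t s by simp
  then show False using t s by (simp add: prod_eq_iff)
qed

lemma key_H:
  assumes "(i, j) \<in> L" "i < fst (x (Suc d))" "j < snd (x (Suc d))" "H i < V j"
  shows "(Suc i, j) \<in> L"
proof -
  obtain t where t: "H i = Suc t" "t \<le> d" "fst (x t) = i" "x (Suc t) = (Suc i, snd (x t))" using Hspec[of i] assms by auto
  obtain s where s: "V j = Suc s" "s \<le> d" "snd (x s) = j" using Vspec[of j] assms by auto
  have "Suc t \<le> s" using t s assms by simp
  then have "le2 (x (Suc t)) (x s)" using x_mono s by simp
  then have "snd (x t) \<le> j" using t s unfolding le2_def by simp
  moreover have "x (Suc t) \<in> L" by (rule x_L) (use t in simp)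
  ultimately show ?thesis using join[OF assms(1), of "x (Suc t)"] t by (simp add: max_def)
qed

lemma key_V:
  assumes "(i, j) \<in> L" "i < fst (x (Suc d))" "j < snd (x (Suc d))" "V j < H i"
  shows "(i, Suc j) \<in> L"
proof -
  obtain t where t: "V j = Suc t" "t \<le> d" "snd (x t) = j" "x (Suc t) = (fst (x t), Suc j)" using Vspec[of j] assms by auto
  obtain s where s: "H i = Suc s" "s \<le> d" "fst (x s) = i" using Hspec[of i] assms by auto
  have "Suc t \<le> s" using t s assms by simp
  then have "le2 (x (Suc t)) (x s)" using x_mono s by simp
  then have "fst (x t) \<le> i" using t s unfolding le2_def by simp
  moreover have "x (Suc t) \<in> L" by (rule x_L) (use t in simp)
  ultimately show ?thesis using join[OF assms(1), of "x (Suc t)"] t by (simp add: max_def)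
qed


abbreviation lbl where "lbl \<equiv> chain_labels (c0_label d x)"

definition S :: "pt \<Rightarrow> pt \<Rightarrow> nat set" where
  "S u v = H ` {fst u..<fst v} \<union> V ` {snd u..<snd v}"

lemma cov_le: "covers L a b \<Longrightarrow> le2 a b"
  unfolding covers_def lt2_def by auto

lemma mc_le: "max_chain L u v zs \<Longrightarrow> le2 u v"
proof (induction zs arbitrary: u)
  case Nil then show ?case by (simp add: max_chain_def)
next
  case (Cons a zs)
  show ?case
  proof (cases zs)
    case Nil then show ?thesis using Cons.prems by (simp add: mc_single le2_def)
  next
    case (Cons b r)
    then have "covers L u b" "max_chain L b v zs" using Cons.prems by (auto simp: mc_cons)
    then show ?thesis using Cons.IH cov_le le2_trans by blast
  qed
qed

lemma labels_set:
  "max_chain L u v zs \<Longrightarrow> v \<in> L \<Longrightarrow> distinct (lbl zs) \<and> set (lbl zs) = S u v"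
proof (induction zs arbitrary: u)
  case Nil then show ?case by (simp add: max_chain_def)
next
  case (Cons a zs)
  show ?case
  proof (cases zs)
    case Nil then show ?thesis using Cons.prems by (simp add: mc_single cl_single S_def)
  next
    case (Cons b r)
    then have cv: "covers L u b" and mc: "max_chain L b v zs" and au: "a = u"
      using Cons.prems by (auto simp: mc_cons)
    have IH: "distinct (lbl zs) \<and> set (lbl zs) = S b v" using Cons.IH mc Cons.prems by blast
    have bv: "le2 b v" using mc_le mc by blast
    have vt: "fst v \<le> fst (x (Suc d))" "snd v \<le> snd (x (Suc d))"
      using Cons.prems top_fst top_snd by auto
    have l: "lbl (a # zs) = c0_label d x u b # lbl zs" using Cons au by (simp add: cl_cons)
    from cover_step[OF cv] show ?thesis
    proof
      assume b: "b = (Suc (fst u), snd u)"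
      have lb: "c0_label d x u b = H (fst u)" using b by (simp add: lab)
      have lt: "fst u < fst v" using bv b unfolding le2_def by auto
      have "{fst u..<fst v} = insert (fst u) {Suc (fst u)..<fst v}" using lt by auto
      then have "S u v = insert (H (fst u)) (S b v)" using b unfolding S_def by auto
      moreover have "H (fst u) \<notin> S b v"
      proof
        assume "H (fst u) \<in> S b v"
        then consider i where "i \<in> {Suc (fst u)..<fst v}" "H (fst u) = H i"
          | j where "j \<in> {snd u..<snd v}" "H (fst u) = V j"
          using b unfolding S_def by auto
        then show False
        proof cases
          case 1 then show False using H_mono[of "fst u" i] vt by auto
        next
          case 2 then show False using HV_neq[of "fst u" j] vt lt by auto
        qed
      qed
      ultimately show ?thesis using IH l lb by simp
    next
      assume b: "b = (fst u, Suc (snd u))"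
      have lb: "c0_label d x u b = V (snd u)" using b by (simp add: lab)
      have lt: "snd u < snd v" using bv b unfolding le2_def by auto
      have "{snd u..<snd v} = insert (snd u) {Suc (snd u)..<snd v}" using lt by auto
      then have "S u v = insert (V (snd u)) (S b v)" using b unfolding S_def by auto
      moreover have "V (snd u) \<notin> S b v"
      proof
        assume "V (snd u) \<in> S b v"
        then consider i where "i \<in> {fst u..<fst v}" "V (snd u) = H i"
          | j where "j \<in> {Suc (snd u)..<snd v}" "V (snd u) = V j"
          using b unfolding S_def by auto
        then show False
        proof cases
          case 1 then show False using HV_neq[of i "snd u"] vt lt by auto
        next
          case 2 then show False using V_mono[of "snd u" j] vt by auto
        qed
      qed
      ultimately show ?thesis using IH l lb by simp
    qed
  qed
qed

lemma labels_inj: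
  "max_chain L u v zs \<Longrightarrow> max_chain L u v zs' \<Longrightarrow> lbl zs = lbl zs' \<Longrightarrow> zs = zs'"
proof (induction zs arbitrary: u zs')
  case Nil then show ?case by (simp add: max_chain_def)
next
  case (Cons a zs)
  obtain a' zs2 where z': "zs' = a' # zs2" using Cons.prems by (cases zs') (auto simp: max_chain_def)
  show ?case
  proof (cases zs)
    case Nil
    then have "lbl zs' = []" using Cons.prems by (simp add: cl_single)
    then have "zs2 = []" using z' by (cases zs2) (auto simp: cl_cons)
    then show ?thesis using Nil Cons.prems z' by (simp add: mc_single)
  next
    case (Cons b r)
    have "zs2 \<noteq> []" using Cons.prems Cons z' by (auto simp: cl_cons cl_single)
    then obtain b' r' where z2: "zs2 = b' # r'" by (cases zs2) auto
    have cv: "covers L u b" "max_chain L b v zs" "a = u" using Cons.prems Cons by (auto simp: mc_cons)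
    have cv': "covers L u b'" "max_chain L b' v zs2" "a' = u" using Cons.prems z' z2 by (auto simp: mc_cons)
    have eq: "c0_label d x u b = c0_label d x u b'" "lbl zs = lbl zs2"
      using Cons.prems Cons z' z2 cv cv' by (auto simp: cl_cons)
    have bL: "b \<in> L" "b' \<in> L" using cv cv' unfolding covers_def by auto
    have "b = b'"
      using cover_step[OF cv(1)] cover_step[OF cv'(1)]
    proof (elim disjE)
      assume "b = (Suc (fst u), snd u)" "b' = (fst u, Suc (snd u))"
      then show ?thesis using eq(1) HV_neq[of "fst u" "snd u"] top_fst[OF bL(1)] top_snd[OF bL(2)]
        by (simp add: lab)
    next
      assume "b' = (Suc (fst u), snd u)" "b = (fst u, Suc (snd u))"
      then show ?thesis using eq(1) HV_neq[of "fst u" "snd u"] top_fst[OF bL(2)] top_snd[OF bL(1)]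
        by (simp add: lab)
    qed auto
    then have "zs = zs2" using Cons.IH[OF cv(2)] cv'(2) eq(2) by simp
    then show ?thesis using z' cv cv' by simp
  qed
qed

lemma exists_sorted:
  "rk v - rk u = n \<Longrightarrow> u \<in> L \<Longrightarrow> v \<in> L \<Longrightarrow> le2 u v \<Longrightarrow>
   \<exists>zs. max_chain L u v zs \<and> sorted (lbl zs)"
proof (induction n arbitrary: u)
  case 0
  then have "u = v" unfolding le2_def rk_def by (cases u, cases v) auto
  then show ?case by (intro exI[of _ "[u]"]) (simp add: mc_single cl_single)
next
  case (Suc n)
  have uv: "u \<noteq> v" using Suc.prems by auto
  have vt: "fst v \<le> fst (x (Suc d))" "snd v \<le> snd (x (Suc d))"
    using Suc.prems top_fst top_snd by auto
  have "\<exists>w\<in>L. (w = (Suc (fst u), snd u) \<or> w = (fst u, Suc (snd u))) \<and> le2 w v \<and>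
          (\<forall>l\<in>S w v. c0_label d x u w < l)"
  proof (cases "fst u < fst v \<and> snd u < snd v")
    case True
    have uL: "(fst u, snd u) \<in> L" using Suc.prems by simp
    show ?thesis
    proof (cases "H (fst u) < V (snd u)")
      case lt: True
      define w where "w = (Suc (fst u), snd u)"
      have "w \<in> L" unfolding w_def using key_H[OF uL] True vt lt by auto
      moreover have "le2 w v" using True Suc.prems unfolding w_def le2_def by auto
      moreover have "\<forall>l\<in>S w v. c0_label d x u w < l"
      proof
        fix l assume "l \<in> S w v"
        then consider i where "i \<in> {Suc (fst u)..<fst v}" "l = H i"
          | j where "j \<in> {snd u..<snd v}" "l = V j"
          unfolding S_def w_def by auto
        then show "c0_label d x u w < l"
        proof cases
          case 1 then show ?thesis using H_mono[of "fst u" i] vt by (auto simp: lab w_def)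
        next
          case 2
          then have "V (snd u) \<le> V j" using V_mono[of "snd u" j] vt by (cases "j = snd u") auto
          then show ?thesis using lt \<open>l = _\<close> by (auto simp: lab w_def)
        qed
      qed
      ultimately show ?thesis unfolding w_def by blast
    next
      case False
      then have lt: "V (snd u) < H (fst u)" using HV_neq[of "fst u" "snd u"] True vt by auto
      define w where "w = (fst u, Suc (snd u))"
      have "w \<in> L" unfolding w_def using key_V[OF uL] True vt lt by auto
      moreover have "le2 w v" using True Suc.prems unfolding w_def le2_def by auto
      moreover have "\<forall>l\<in>S w v. c0_label d x u w < l"
      proof
        fix l assume "l \<in> S w v"
        then consider i where "i \<in> {fst u..<fst v}" "l = H i"
          | j where "j \<in> {Suc (snd u)..<snd v}" "l = V j"
          unfolding S_def w_def by auto
        then show "c0_label d x u w < l"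
        proof cases
          case 2 then show ?thesis using V_mono[of "snd u" j] vt by (auto simp: lab w_def)
        next
          case 1
          then have "H (fst u) \<le> H i" using H_mono[of "fst u" i] vt by (cases "i = fst u") auto
          then show ?thesis using lt \<open>l = _\<close> by (auto simp: lab w_def)
        qed
      qed
      ultimately show ?thesis unfolding w_def by blast
    qed
  next
    case False
    obtain w where w: "w \<in> L" "w = (Suc (fst u), snd u) \<or> w = (fst u, Suc (snd u))" "le2 w v"
      using next_step[of u v] Suc.prems uv by blast
    show ?thesis
    proof (cases "fst u = fst v")
      case True
      then have wv: "w = (fst u, Suc (snd u))" using w unfolding le2_def by auto
      have "\<forall>l\<in>S w v. c0_label d x u w < l"
      proof
        fix l assume "l \<in> S w v"
        then obtain j where "j \<in> {Suc (snd u)..<snd v}" "l = V j"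
          unfolding S_def wv using True by auto
        then show "c0_label d x u w < l" using V_mono[of "snd u" j] vt by (auto simp: lab wv)
      qed
      then show ?thesis using w by blast
    next
      case False2: False
      then have "snd u = snd v" using False Suc.prems unfolding le2_def by auto
      then have wv: "w = (Suc (fst u), snd u)" using w unfolding le2_def by auto
      have "\<forall>l\<in>S w v. c0_label d x u w < l"
      proof
        fix l assume "l \<in> S w v"
        then obtain i where "i \<in> {Suc (fst u)..<fst v}" "l = H i"
          unfolding S_def wv using \<open>snd u = snd v\<close> by auto
        then show "c0_label d x u w < l" using H_mono[of "fst u" i] vt by (auto simp: lab wv)
      qed
      then show ?thesis using w by blast
    qed
  qed
  then obtain w where w: "w \<in> L" "w = (Suc (fst u), snd u) \<or> w = (fst u, Suc (snd u))" "le2 w v"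
    "\<forall>l\<in>S w v. c0_label d x u w < l" by blast
  have "rk v - rk w = n" using Suc.prems(1) w(2) unfolding rk_def by auto
  then obtain zs where zs: "max_chain L w v zs" "sorted (lbl zs)" using Suc.IH w Suc.prems by blast
  obtain r where r: "zs = w # r" using zs(1) unfolding max_chain_def by (cases zs) auto
  have cv: "covers L u w" using step_cover Suc.prems w by blast
  have mc: "max_chain L u v (u # w # r)" using zs r cv by (simp add: mc_cons)
  have "set (lbl zs) = S w v" using labels_set zs(1) Suc.prems by blast
  then have "sorted (lbl (u # w # r))" using zs r w(4) by (auto simp: cl_cons less_imp_le)
  then show ?case using mc by blast
qed

lemma EL: "EL_labeling L (c0_label d x)"
  unfolding EL_labeling_def
proof (intro ballI impI conjI allI)
  fix u v assume uL: "u \<in> L" and vL: "v \<in> L" and uv: "le2 u v"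
  obtain zs where zs: "max_chain L u v zs" "sorted (lbl zs)"
    using exists_sorted[OF refl uL vL uv] by blast
  show "\<exists>!zs. max_chain L u v zs \<and> sorted (lbl zs)"
  proof (rule ex1I[of _ zs])
    show "max_chain L u v zs \<and> sorted (lbl zs)" using zs by blast
  next
    fix zs' assume z': "max_chain L u v zs' \<and> sorted (lbl zs')"
    have "lbl zs' = lbl zs"
      using labels_set[OF zs(1) vL] labels_set[of u v zs'] z' vL zs(2)
      by (metis sorted_distinct_set_unique)
    then show "zs' = zs" using labels_inj z' zs(1) by blast
  qed
next
  fix u v zs zs'
  assume vL: "v \<in> L"
    and h: "max_chain L u v zs \<and> sorted (lbl zs) \<and> max_chain L u v zs' \<and> zs' \<noteq> zs"
  have "lbl zs \<noteq> lbl zs'" using labels_inj h by metis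
  then show "lex_less (lbl zs) (lbl zs')"
    unfolding lex_less_def
    using lex_sorted labels_set[of u v zs] labels_set[of u v zs'] h vL by metis
qed

end

theorem proposition6:
  fixes L :: "pt set" and d :: nat and x :: "nat \<Rightarrow> pt"
  assumes "planar_distributive_lattice L"
    and "simple_pdl L"
    and "rk (topL L) = d + 1"
    and "is_c0 L d x"
  shows "EL_labeling L (c0_label d x)"
proof -
  interpret pl L d x using assms by unfold_locales
  show ?thesis by (rule EL)
qed

end
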